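(* Let $n\ge2$, $1\le k\le n-1$, $\alpha>0$, and let $Y$ be a random variable with continuous distribution function $G$ with $l_G=0$, $r_G=\infty$. Then $G(y)=1-\exp\{-cy^{\alpha}\}$ ($y>0$) for some constant $c>0$ if and only if \[ E\big[[Y(n)]^{-\alpha(k+1)}\mid Y(n-k)=s,\ Y(n+1)=t\big]=t^{-\alpha k}s^{-\alpha}\qquad (0<s<t<\infty). \]
   Context: $Y_1,Y_2,\dots$ are i.i.d. copies of $Y$ with distribution function $G$; $l_G=\inf\{y:G(y)>0\}$, $r_G=\sup\{y:G(y)<1\}$. Upper record times $L(1)=1$, $L(m)=\min\{j>L(m-1):Y_j>Y_{L(m-1)}\}$, record values $Y(m)=Y_{L(m)}$. With $R(y)=-\ln(1-G(y))$, conditional expectations given $Y(n-k)=s$, $Y(n+1)=t$ use the conditional density of $Y(n)$: $k[\frac{R(x)-R(s)}{R(t)-R(s)}]^{k-1}\frac{R'(x)}{R(t)-R(s)}$, $s<x<t$. *)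

theory Defs
  imports "HOL-Analysis.Analysis"
begin

definition lG :: "(real \<Rightarrow> real) \<Rightarrow> ereal" where
  "lG G = Inf (ereal ` {y. G y > 0})"

definition rG :: "(real \<Rightarrow> real) \<Rightarrow> ereal" where
  "rG G = Sup (ereal ` {y. G y < 1})"

definition is_dist_fun :: "(real \<Rightarrow> real) \<Rightarrow> bool" where
  "is_dist_fun G \<longleftrightarrow> mono G \<and> (\<forall>a. continuous (at_right a) G)
     \<and> (G \<longlongrightarrow> 0) at_bot \<and> (G \<longlongrightarrow> 1) at_top"

definition RG :: "(real \<Rightarrow> real) \<Rightarrow> real \<Rightarrow> real" where
  "RG G y = - ln (1 - G y)"

text \<open>Conditional distribution function of Y(n) given Y(n-k)=s, Y(n+1)=t:
  P(Y(n) \<le> x | ...) = ((R x - R s)/(R t - R s))^k for s < x < t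
  (integral of the conditional density k[(R(x)-R(s))/(R(t)-R(s))]^(k-1) R'(x)/(R(t)-R(s))).\<close>
definition rec_cond_cdf :: "(real \<Rightarrow> real) \<Rightarrow> nat \<Rightarrow> real \<Rightarrow> real \<Rightarrow> real \<Rightarrow> real" where
  "rec_cond_cdf G k s t x =
     (if x \<le> s then 0 else if t \<le> x then 1
      else ((RG G x - RG G s) / (RG G t - RG G s)) ^ k)"

text \<open>Conditional law of Y(n) given Y(n-k)=s, Y(n+1)=t (as a Lebesgue-Stieltjes measure);
  it does not depend on n.\<close>
definition rec_cond_law :: "(real \<Rightarrow> real) \<Rightarrow> nat \<Rightarrow> nat \<Rightarrow> real \<Rightarrow> real \<Rightarrow> real measure" where
  "rec_cond_law G n k s t = interval_measure (rec_cond_cdf G k s t)"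

definition rec_cond_exp ::
  "(real \<Rightarrow> real) \<Rightarrow> nat \<Rightarrow> nat \<Rightarrow> (real \<Rightarrow> real) \<Rightarrow> real \<Rightarrow> real \<Rightarrow> real" where
  "rec_cond_exp G n k h s t = integral\<^sup>L (rec_cond_law G n k s t) h"

end

theory Submission
  imports Defs "HOL-Probability.Probability"
begin

lemma ibp:
  fixes F Fc :: "real \<Rightarrow> real" and s t \<beta> :: real
  assumes st: "0 < s" "s < t" and b: "\<beta> > 0"
    and mono: "\<And>x y. x \<le> y \<Longrightarrow> F x \<le> F y"
    and rc: "\<And>a. continuous (at_right a) F"
    and F0: "\<And>x. x \<le> s \<Longrightarrow> F x = 0" and F1: "\<And>x. t \<le> x \<Longrightarrow> F x = 1"
    and Fc: "continuous_on {s..t} Fc" and Fceq: "\<And>u. s \<le> u \<Longrightarrow> u < t \<Longrightarrow> F u = Fc u"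
    and Fcnn: "\<And>u. s \<le> u \<Longrightarrow> u \<le> t \<Longrightarrow> 0 \<le> Fc u"
  shows "integral\<^sup>L (interval_measure F) (\<lambda>x. x powr (-\<beta>))
          = t powr (-\<beta>) + integral {s..t} (\<lambda>u. \<beta> * u powr (-\<beta>-1) * Fc u)"
proof -
  define M where "M = interval_measure F"
  have lim0: "(F \<longlongrightarrow> 0) at_bot"
    by (rule tendsto_eventually) (use F0 in \<open>auto simp: eventually_at_bot_linorder\<close>)
  have lim1: "(F \<longlongrightarrow> 1) at_top"
    by (rule tendsto_eventually) (use F1 in \<open>auto simp: eventually_at_top_linorder\<close>)
  interpret real_distribution M
    unfolding M_def using real_distribution_interval_measure[OF mono rc lim0 lim1] by auto
  have Iic: "\<And>x. emeasure M {..x} = F x"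
    unfolding M_def using emeasure_interval_measure_Iic[OF mono rc lim0] by auto
  have Ioc: "\<And>a b. a \<le> b \<Longrightarrow> emeasure M {a<..b} = F b - F a"
    unfolding M_def using emeasure_interval_measure_Ioc mono rc by auto
  have AE1: "AE x in M. s < x"
    by (rule AE_I[of _ _ "{..s}"]) (auto simp: Iic F0)
  have "prob {t<..} = 1 - prob {..t}"
    using prob_compl[of "{..t}"] by (simp add: Compl_eq_Diff_UNIV[symmetric] Compl_atMost)
  also have "prob {..t} = 1" using Iic[of t] F1[of t] by (simp add: emeasure_eq_measure)
  finally have "emeasure M {t<..} = 0" by (simp add: emeasure_eq_measure)
  then have AE2: "AE x in M. x \<le> t"
    by (intro AE_I[of _ _ "{t<..}"]) auto
  define \<phi> where "\<phi> x = x powr (-\<beta>)" for x :: real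
  define \<psi> where "\<psi> u = \<beta> * u powr (-\<beta>-1)" for u :: real
  define g where "g x = (\<phi> x - \<phi> t) * indicator {s<..t} x" for x
  have gnn: "0 \<le> g x" for x
    using st b by (auto simp: g_def \<phi>_def indicator_def intro!: powr_mono2')
  have gbd: "g x \<le> \<phi> s" for x
  proof -
    have "x \<in> {s<..t} \<Longrightarrow> \<phi> x \<le> \<phi> s" using st b by (auto simp: \<phi>_def intro!: powr_mono2')
    moreover have "0 \<le> \<phi> t" by (simp add: \<phi>_def)
    moreover have "0 \<le> \<phi> s" by (simp add: \<phi>_def)
    ultimately show ?thesis by (auto simp: g_def indicator_def)
  qed
  have [measurable]: "\<phi> \<in> borel_measurable borel" unfolding \<phi>_def by measurable
  have [measurable]: "\<psi> \<in> borel_measurable borel" unfolding \<psi>_def by measurable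
  have gm[measurable]: "g \<in> borel_measurable borel" unfolding g_def by measurable
  have gint: "integrable M g"
    by (rule integrable_const_bound[where B="\<phi> s"]) (use gnn gbd in auto)
  have "integral\<^sup>L M \<phi> = integral\<^sup>L M (\<lambda>x. \<phi> t + g x)"
    by (rule integral_cong_AE) (use AE1 AE2 in \<open>auto simp: g_def\<close>)
  also have "\<dots> = \<phi> t + integral\<^sup>L M g"
    using Bochner_Integration.integral_add[OF integrable_const[of "\<phi> t"] gint] prob_space by simp
  finally have eq1: "integral\<^sup>L M \<phi> = \<phi> t + integral\<^sup>L M g" .
  have eq2: "integral\<^sup>L M g = enn2real (\<integral>\<^sup>+ x. ennreal (g x) \<partial>M)"
    by (rule integral_eq_nn_integral) (use gnn in auto)
  define H where "H x u = (if s < x \<and> x \<le> u \<and> u \<le> t then ennreal (\<psi> u) else 0)" for x u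
  have Hm: "case_prod H \<in> borel_measurable (M \<Otimes>\<^sub>M lborel)"
  proof -
    have "case_prod H \<in> borel_measurable (borel \<Otimes>\<^sub>M borel)"
      unfolding H_def by measurable
    moreover have "sets (M \<Otimes>\<^sub>M lborel) = sets (borel \<Otimes>\<^sub>M borel)"
      by (intro sets_pair_measure_cong) (auto simp: M_def)
    ultimately show ?thesis
      using measurable_cong_sets[of "M \<Otimes>\<^sub>M lborel" "borel \<Otimes>\<^sub>M borel" borel borel] by simp
  qed
  have inner1: "(\<integral>\<^sup>+ u. H x u \<partial>lborel) = ennreal (g x)" for x
  proof (cases "x \<in> {s<..t}")
    case True
    have "(\<integral>\<^sup>+ u. H x u \<partial>lborel) = (\<integral>\<^sup>+ u. ennreal (\<psi> u) * indicator {x..t} u \<partial>lborel)"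
      using True by (intro nn_integral_cong) (auto simp: H_def indicator_def)
    also have "\<dots> = ennreal ((- \<phi> t) - (- \<phi> x))"
    proof (rule nn_integral_FTC_Icc)
      fix u assume u: "u \<in> {x..t}"
      then have "u > 0" using True st by auto
      show "((\<lambda>u. - \<phi> u) has_real_derivative \<psi> u) (at u)"
        unfolding \<phi>_def \<psi>_def using DERIV_minus[OF has_real_derivative_powr[OF \<open>u > 0\<close>, of "-\<beta>"]]
        by simp
      show "0 \<le> \<psi> u" using b by (simp add: \<psi>_def)
    qed (use True in auto)
    finally show ?thesis using True by (simp add: g_def)
  next
    case False
    then have "H x = (\<lambda>u. 0)" by (auto simp: H_def fun_eq_iff)
    then show ?thesis using False by (simp add: g_def)
  qed
  have inner2: "(\<integral>\<^sup>+ x. H x u \<partial>M) = ennreal (\<psi> u * F u) * indicator {s..t} u" for u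
  proof (cases "u \<in> {s..t}")
    case True
    have "(\<integral>\<^sup>+ x. H x u \<partial>M) = (\<integral>\<^sup>+ x. ennreal (\<psi> u) * indicator {s<..u} x \<partial>M)"
      using True by (intro nn_integral_cong) (auto simp: H_def indicator_def)
    also have "\<dots> = ennreal (\<psi> u) * emeasure M {s<..u}"
      by (rule nn_integral_cmult_indicator) (simp add: M_def)
    also have "emeasure M {s<..u} = ennreal (F u)"
      using Ioc[of s u] True F0[of s] by simp
    also have "ennreal (\<psi> u) * ennreal (F u) = ennreal (\<psi> u * F u)"
      using True mono[of s u] F0[of s] b by (simp add: ennreal_mult \<psi>_def)
    finally show ?thesis using True by simp
  next
    case False
    then have "(\<lambda>x. H x u) = (\<lambda>x. 0)" by (auto simp: H_def fun_eq_iff)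
    then show ?thesis using False by simp
  qed
  have inner3: "(\<integral>\<^sup>+ u. ennreal (\<psi> u * F u) * indicator {s..t} u \<partial>lborel)
       = (\<integral>\<^sup>+ u. ennreal (\<psi> u * Fc u) * indicator {s..t} u \<partial>lborel)"
  proof (rule nn_integral_cong_AE)
    show "AE u in lborel. ennreal (\<psi> u * F u) * indicator {s..t} u = ennreal (\<psi> u * Fc u) * indicator {s..t} u"
      using AE_lborel_singleton[of t] by eventually_elim (auto simp: indicator_def Fceq)
  qed
  have "continuous_on {s..t} \<psi>" unfolding \<psi>_def using st
    by (auto intro!: continuous_intros)
  then have cont: "continuous_on {s..t} (\<lambda>u. \<psi> u * Fc u)"
    using Fc by (intro continuous_intros)
  have Inn: "0 \<le> integral {s..t} (\<lambda>u. \<psi> u * Fc u)"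
    by (rule Henstock_Kurzweil_Integration.integral_nonneg)
       (use cont integrable_continuous_interval Fcnn b in \<open>auto simp: \<psi>_def\<close>)
  interpret P: pair_sigma_finite M lborel
    unfolding pair_sigma_finite_def
    using finite_measure.sigma_finite_measure[OF finite_measure_axioms] lborel.sigma_finite_measure_axioms by simp
  have "(\<integral>\<^sup>+ x. ennreal (g x) \<partial>M) = (\<integral>\<^sup>+ x. (\<integral>\<^sup>+ u. H x u \<partial>lborel) \<partial>M)"
    by (simp add: inner1)
  also have "\<dots> = (\<integral>\<^sup>+ u. (\<integral>\<^sup>+ x. H x u \<partial>M) \<partial>lborel)"
    using P.Fubini'[OF Hm] by simp
  also have "\<dots> = (\<integral>\<^sup>+ u. ennreal (\<psi> u * Fc u) * indicator {s..t} u \<partial>lborel)"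
    by (simp add: inner2 inner3)
  also have "\<dots> = ennreal (integral {s..t} (\<lambda>u. \<psi> u * Fc u))"
  proof (rule nn_integral_has_integral_lebesgue')
    show "0 \<le> \<psi> u * Fc u" if "u \<in> {s..t}" for u
      using that b Fcnn by (auto simp: \<psi>_def)
    show "((\<lambda>u. \<psi> u * Fc u) has_integral integral {s..t} (\<lambda>u. \<psi> u * Fc u)) {s..t}"
      using cont integrable_continuous_interval integrable_integral by blast
  qed
  finally have "integral\<^sup>L M g = integral {s..t} (\<lambda>u. \<psi> u * Fc u)"
    using eq2 Inn by simp
  with eq1 show ?thesis
    unfolding M_def \<phi>_def[abs_def] \<psi>_def by (simp add: mult.assoc)
qed


lemma G_nonneg:
  assumes "is_dist_fun G" shows "0 \<le> G x"
proof -
  have m: "mono G" and l: "(G \<longlongrightarrow> 0) at_bot" using assms by (auto simp: is_dist_fun_def)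
  have "eventually (\<lambda>y. G y \<le> G x) at_bot"
    unfolding eventually_at_bot_linorder using m by (auto simp: mono_def)
  then show ?thesis using tendsto_upperbound[OF l] by auto
qed

lemma G_lt1:
  assumes "is_dist_fun G" "rG G = \<infinity>" shows "G x < 1"
proof (rule ccontr)
  assume "\<not> G x < 1"
  then have "G x \<ge> 1" by simp
  have m: "mono G" using assms by (auto simp: is_dist_fun_def)
  have "\<And>y. G y < 1 \<Longrightarrow> y < x"
  proof (rule ccontr)
    fix y assume "G y < 1" "\<not> y < x"
    then have "G x \<le> G y" using m by (auto simp: mono_def)
    then show False using \<open>G y < 1\<close> \<open>G x \<ge> 1\<close> by simp
  qed
  then have "Sup (ereal ` {y. G y < 1}) \<le> ereal x"
    by (intro Sup_least) (auto simp: less_imp_le)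
  then show False using assms(2) by (simp add: rG_def)
qed

lemma G_zero:
  assumes "is_dist_fun G" "continuous_on UNIV G" "lG G = 0" shows "G 0 = 0"
proof (rule ccontr)
  assume "G 0 \<noteq> 0"
  then have pos: "G 0 > 0" using G_nonneg[OF assms(1), of 0] by simp
  have "(G \<longlongrightarrow> G 0) (at_left 0)"
    using assms(2) by (metis continuous_on_def UNIV_I tendsto_within_subset subset_UNIV)
  then have "eventually (\<lambda>y. G y > 0) (at_left (0::real))"
    using order_tendstoD(1)[OF _ pos] by blast
  moreover have "eventually (\<lambda>y. y \<in> {-1<..<0}) (at_left (0::real))"
    by (rule eventually_at_left_real) simp
  ultimately have "eventually (\<lambda>y. G y > 0 \<and> y < 0) (at_left (0::real))"
    by eventually_elim auto
  then obtain y where y: "G y > 0" "y < 0"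
    using eventually_happens[of _ "at_left (0::real)"] by (auto simp: trivial_limit_at_left_real)
  then have "Inf (ereal ` {y. G y > 0}) \<le> ereal y" by (intro Inf_lower) auto
  then show False using assms(3) y by (simp add: lG_def)
qed

lemma R_mono:
  assumes "is_dist_fun G" "rG G = \<infinity>" "x \<le> y" shows "RG G x \<le> RG G y"
proof -
  have "G x \<le> G y" using assms by (auto simp: is_dist_fun_def mono_def)
  then show ?thesis using G_lt1[OF assms(1,2), of x] G_lt1[OF assms(1,2), of y]
    by (simp add: RG_def)
qed

lemma R_cont:
  assumes "is_dist_fun G" "rG G = \<infinity>" "continuous_on UNIV G" shows "continuous_on UNIV (RG G)"
proof -
  have "continuous_on UNIV (\<lambda>x. - ln (1 - G x))"
  proof -
    have ne: "\<And>x. 1 - G x \<noteq> 0" using G_lt1[OF assms(1,2)] by (metis less_irrefl right_minus_eq)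
    show ?thesis using assms(3) ne by (intro continuous_intros) auto
  qed
  then show ?thesis by (simp add: RG_def[abs_def])
qed

lemma rc_helper:
  fixes F H :: "real \<Rightarrow> real"
  assumes "eventually (\<lambda>x. F x = H x) (at_right a)" "F a = H a" "isCont H a"
  shows "continuous (at_right a) F"
proof -
  have "(H \<longlongrightarrow> H a) (at_right a)"
    using assms(3) by (simp add: isCont_def filterlim_at_split)
  moreover have "eventually (\<lambda>x. H x = F x) (at_right a)"
    using assms(1) by (auto elim: eventually_mono)
  ultimately have "(F \<longlongrightarrow> F a) (at_right a)"
    using assms(2) Lim_transform_eventually by metis
  then show ?thesis by (simp add: continuous_within)
qed

lemma cdf_props:
  fixes R :: "real \<Rightarrow> real" and k :: nat
  assumes Rm: "\<And>x y. x \<le> y \<Longrightarrow> R x \<le> R y" and Rc: "continuous_on UNIV R"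
    and st: "s < t" and k: "1 \<le> k"
  defines "F \<equiv> \<lambda>x. if x \<le> s then 0 else if t \<le> x then 1 else ((R x - R s) / (R t - R s)) ^ k"
  defines "Fc \<equiv> \<lambda>x. ((R x - R s) / (R t - R s)) ^ k"
  shows "\<And>x y. x \<le> y \<Longrightarrow> F x \<le> F y" "\<And>a. continuous (at_right a) F"
    "\<And>x. x \<le> s \<Longrightarrow> F x = 0" "\<And>x. t \<le> x \<Longrightarrow> F x = 1"
    "continuous_on {s..t} Fc" "\<And>u. s \<le> u \<Longrightarrow> u < t \<Longrightarrow> F u = Fc u"
    "\<And>u. s \<le> u \<Longrightarrow> u \<le> t \<Longrightarrow> 0 \<le> Fc u"
proof -
  define q where "q x = (R x - R s) / (R t - R s)" for x
  have q01: "0 \<le> q x \<and> q x \<le> 1" if "s \<le> x" "x \<le> t" for x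
  proof (cases "R t = R s")
    case True then show ?thesis by (simp add: q_def)
  next
    case False
    then have "R t > R s" using Rm[of s t] st by simp
    then show ?thesis using Rm[OF that(1)] Rm[OF that(2)] by (simp add: q_def field_simps)
  qed
  have qm: "q x \<le> q y" if "x \<le> y" for x y
    using Rm[OF that] Rm[of s t] st by (simp add: q_def divide_right_mono)
  have Fq: "F = (\<lambda>x. if x \<le> s then 0 else if t \<le> x then 1 else q x ^ k)"
    unfolding F_def q_def by simp
  have Fcq: "Fc = (\<lambda>x. q x ^ k)" unfolding Fc_def q_def by simp
  have qs: "q s = 0" by (simp add: q_def)
  have "q = (\<lambda>x. (R x - R s) * (1 / (R t - R s)))" by (simp add: q_def fun_eq_iff)
  have qc: "continuous_on UNIV q" unfolding \<open>q = _\<close> by (intro continuous_intros Rc)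
  show "\<And>x. x \<le> s \<Longrightarrow> F x = 0" "\<And>x. t \<le> x \<Longrightarrow> F x = 1" using st by (auto simp: F_def)
  show "continuous_on {s..t} Fc" unfolding Fcq
    by (intro continuous_intros continuous_on_subset[OF qc]) auto
  show "\<And>u. s \<le> u \<Longrightarrow> u < t \<Longrightarrow> F u = Fc u"
    using k qs by (auto simp: Fq Fcq)
  show "\<And>u. s \<le> u \<Longrightarrow> u \<le> t \<Longrightarrow> 0 \<le> Fc u" using q01 by (simp add: Fcq)
  show "F x \<le> F y" if "x \<le> y" for x y
  proof -
    have a: "0 \<le> F z" "F z \<le> 1" for z using q01[of z] st
      by (auto simp: Fq intro: power_le_one)
    show ?thesis
    proof (cases "x \<le> s")
      case True then show ?thesis using a by (simp add: Fq)
    next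
      case xs: False
      show ?thesis
      proof (cases "t \<le> x")
        case True then show ?thesis using that by (simp add: Fq)
      next
        case False
        show ?thesis
        proof (cases "t \<le> y")
          case True then show ?thesis using a[of x] that st by (simp add: Fq)
        next
          case False
          then show ?thesis using xs \<open>\<not> t \<le> x\<close> that q01[of x] qm[OF that]
            by (auto simp: Fq intro: power_mono)
        qed
      qed
    qed
  qed
  show "continuous (at_right a) F" for a
  proof (cases "a < s")
    case True
    have "eventually (\<lambda>x. x \<in> {a<..<s}) (at_right a)" by (rule eventually_at_right_real) fact
    then have "eventually (\<lambda>x. F x = (\<lambda>_. 0) x) (at_right a)"
      by eventually_elim (auto simp: Fq)
    then show ?thesis by (rule rc_helper) (use True in \<open>auto simp: Fq\<close>)
  next
    case nas: False
    show ?thesis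
    proof (cases "t \<le> a")
      case True
      have "eventually (\<lambda>x. x \<in> {a<..<a+1}) (at_right a)" by (rule eventually_at_right_real) simp
      then have "eventually (\<lambda>x. F x = (\<lambda>_. 1) x) (at_right a)"
        by eventually_elim (use True st in \<open>auto simp: Fq\<close>)
      then show ?thesis by (rule rc_helper) (use True st in \<open>auto simp: Fq\<close>)
    next
      case False
      have "eventually (\<lambda>x. x \<in> {a<..<t}) (at_right a)" by (rule eventually_at_right_real) (use False in simp)
      then have "eventually (\<lambda>x. F x = (\<lambda>x. q x ^ k) x) (at_right a)"
        by eventually_elim (use False nas in \<open>auto simp: Fq\<close>)
      then show ?thesis
      proof (rule rc_helper)
        show "F a = q a ^ k" using nas False qs k by (auto simp: Fq)
        show "isCont (\<lambda>x. q x ^ k) a"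
          using qc by (intro continuous_intros) (simp add: continuous_on_eq_continuous_at)
      qed
    qed
  qed
qed

lemma cexp:
  assumes "is_dist_fun G" "continuous_on UNIV G" "rG G = \<infinity>" "0 < s" "s < t" "1 \<le> k" "\<alpha> > 0"
  shows "rec_cond_exp G n k (\<lambda>x. x powr (- \<alpha> * real (k + 1))) s t
     = t powr (- (\<alpha> * real (k+1))) + integral {s..t} (\<lambda>u. \<alpha> * real (k+1) * u powr (- (\<alpha> * real (k+1)) - 1)
          * ((RG G u - RG G s) / (RG G t - RG G s)) ^ k)"
proof -
  note cp = cdf_props[OF R_mono[OF assms(1,3)] R_cont[OF assms(1,3,2)] assms(5,6)]
  have eq: "rec_cond_cdf G k s t = (\<lambda>x. if x \<le> s then 0 else if t \<le> x then 1
     else ((RG G x - RG G s)/(RG G t - RG G s))^k)" by (simp add: rec_cond_cdf_def fun_eq_iff)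
  have b: "\<alpha> * real (k+1) > 0" using assms by simp
  show ?thesis
    unfolding rec_cond_exp_def rec_cond_law_def eq
    using ibp[OF assms(4,5) b cp] by simp
qed

lemma pw1: "(u::real) > 0 \<Longrightarrow> u powr (\<alpha> * real m) = (u powr \<alpha>) ^ m"
  by (simp add: powr_powr[symmetric] powr_realpow)

lemma pw2: "(u::real) > 0 \<Longrightarrow> u powr (- (\<alpha> * real m)) = 1 / (u powr \<alpha>) ^ m"
  by (simp add: powr_minus_divide pw1)

lemma pw3: "(u::real) > 0 \<Longrightarrow> u powr (- (\<alpha> * real m) - 1) = 1 / ((u powr \<alpha>) ^ m * u)"
proof -
  assume u: "u > 0"
  have "u powr (- (\<alpha> * real m) - 1) = u powr (- (\<alpha> * real m)) / u powr 1" by (rule powr_diff)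
  then show ?thesis using u by (simp add: pw2)
qed

lemma pw4: "(u::real) > 0 \<Longrightarrow> u powr (\<alpha> - 1) = u powr \<alpha> / u"
  by (simp add: powr_diff)

lemma alg0: "(X::real) > 0 \<Longrightarrow> u > 0 \<Longrightarrow> p > 0 \<Longrightarrow> b > 0 \<Longrightarrow> c > 0 \<Longrightarrow>
   K * (p * (\<alpha> * (X / u)) / (X * X) * (a / c)) / (p * b) = \<alpha> * K * (1 / (X * c * u)) * (a / b)"
  by (simp add: field_simps)

lemma alg1: "(T::real) > 0 \<Longrightarrow> p > 0 \<Longrightarrow> a > 0 \<Longrightarrow> c > 0 \<Longrightarrow>
   ((T - p) * a) / (T * c) / (p * a) = 1 / (c * p) - 1 / (T * c)"
  by (simp add: field_simps)

lemma FI: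
  assumes a: "\<alpha> > 0" and st: "0 < s" "s < t"
  shows "integral {s..t} (\<lambda>u. \<alpha> * real (k+1) * u powr (- (\<alpha> * real (k+1)) - 1)
          * ((u powr \<alpha> - s powr \<alpha>) / (t powr \<alpha> - s powr \<alpha>)) ^ k)
        = 1 / ((t powr \<alpha>)^k * s powr \<alpha>) - 1 / (t powr \<alpha>)^(k+1)"
proof -
  define p where "p = s powr \<alpha>"
  define T where "T = t powr \<alpha>"
  have p: "p > 0" using st by (simp add: p_def)
  have Tp: "T > p" using st a by (simp add: p_def T_def powr_less_mono2)
  define A where "A u = (1 - p / u powr \<alpha>) ^ (k+1) / (p * (T - p) ^ k)" for u
  have der: "(A has_real_derivative (\<alpha> * real (k+1) * u powr (- (\<alpha> * real (k+1)) - 1)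
          * ((u powr \<alpha> - p) / (T - p)) ^ k)) (at u)" if u: "u > 0" for u
  proof -
    define X where "X = u powr \<alpha>"
    have X: "X > 0" using u by (simp add: X_def)
    have dX: "((\<lambda>u. u powr \<alpha>) has_real_derivative \<alpha> * (X / u)) (at u)"
      using has_real_derivative_powr[OF u, of \<alpha>] u by (simp add: pw4 X_def)
    have d1: "((\<lambda>u. 1 - p / u powr \<alpha>) has_real_derivative p * (\<alpha> * (X / u)) / X^2) (at u)"
      using DERIV_diff[OF DERIV_const DERIV_divide[OF DERIV_const dX]] X
      by (simp add: X_def power2_eq_square)
    have d2: "(A has_real_derivative (of_nat (k+1) * (p * (\<alpha> * (X / u)) / X^2 * (1 - p / u powr \<alpha>) ^ (k + 1 - Suc 0)) / (p * (T - p) ^ k))) (at u)"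
      unfolding A_def[abs_def] by (rule DERIV_cdivide[OF DERIV_power[OF d1, of "k+1"]])
    have e: "(of_nat (k+1) * (p * (\<alpha> * (X / u)) / X^2 * (1 - p / u powr \<alpha>) ^ (k + 1 - Suc 0)) / (p * (T - p) ^ k))
        = \<alpha> * real (k+1) * u powr (- (\<alpha> * real (k+1)) - 1) * ((u powr \<alpha> - p) / (T - p)) ^ k"
    proof -
      have h1: "1 - p / X = (X - p) / X" using X by (simp add: field_simps)
      have h2: "u powr (- (\<alpha> * real (k+1)) - 1) = 1 / (X^(k+1) * u)" using pw3[OF u, of \<alpha> "k+1"] by (simp add: X_def)
      have h3: "k + 1 - Suc 0 = k" by simp
      have h4: "X^(k+1) = X * X^k" "X^2 = X * X" by (simp_all add: power2_eq_square)
      show ?thesis unfolding h2 X_def[symmetric] h1 h3 h4 power_divide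
        by (rule alg0) (use X u p Tp in auto)
    qed
    show ?thesis using DERIV_cong[OF d2 e] .
  qed
  have "((\<lambda>u. \<alpha> * real (k+1) * u powr (- (\<alpha> * real (k+1)) - 1)
          * ((u powr \<alpha> - p) / (T - p)) ^ k) has_integral (A t - A s)) {s..t}"
  proof (rule fundamental_theorem_of_calculus)
    show "s \<le> t" using st by simp
    fix x assume x: "x \<in> {s..t}"
    then have "x > 0" using st by auto
    show "(A has_vector_derivative (\<alpha> * real (k+1) * x powr (- (\<alpha> * real (k+1)) - 1)
          * ((x powr \<alpha> - p) / (T - p)) ^ k)) (at x within {s..t})"
      unfolding has_real_derivative_iff_has_vector_derivative[symmetric]
      by (rule has_field_derivative_at_within[OF der[OF \<open>x > 0\<close>]])
  qed
  then have "integral {s..t} (\<lambda>u. \<alpha> * real (k+1) * u powr (- (\<alpha> * real (k+1)) - 1)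
          * ((u powr \<alpha> - p) / (T - p)) ^ k) = A t - A s" by (rule integral_unique)
  also have "A t - A s = 1 / (T^k * p) - 1 / T^(k+1)"
  proof -
    have "A s = 0" using p by (simp add: A_def p_def)
    moreover have "1 - p / T = (T - p) / T" using Tp p by (simp add: field_simps)
    ultimately have "A t - A s = ((T - p) * (T-p)^k) / (T * T^k) / (p * (T - p) ^ k)"
      by (simp add: A_def T_def[symmetric] power_divide)
    also have "\<dots> = 1 / (T^k * p) - 1 / (T * T^k)"
      by (rule alg1) (use Tp p in auto)
    finally show ?thesis by simp
  qed
  finally show ?thesis by (simp add: p_def T_def)
qed

lemma alg2: "(X::real) > 0 \<Longrightarrow> c > 0 \<Longrightarrow> p > 0 \<Longrightarrow> t > 0 \<Longrightarrow>
  (\<alpha> * K * (1 / (X * c * t)) * Dk) * ((1 - p / X) * rr)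
   - (Dk * (1 / (c * p) - 1 / (X * c))) * (K * (p * (\<alpha> * (X / t)) / (X * X) * rr)) = 0"
  by (simp add: field_simps)

lemma alg3: "(X::real) > 0 \<Longrightarrow> c > 0 \<Longrightarrow> p > 0 \<Longrightarrow> X > p \<Longrightarrow> e > 0 \<Longrightarrow>
  Dk * (1 / (c * p) - 1 / (X * c)) / ((X - p) * e / (X * c)) = Dk / (p * e)"
  by (simp add: field_simps)

lemma conv_core:
  fixes R :: "real \<Rightarrow> real" and k :: nat
  assumes Rm: "\<And>x y. x \<le> y \<Longrightarrow> R x \<le> R y" and Rc: "continuous_on UNIV R"
    and a: "\<alpha> > 0" and k: "1 \<le> k" and s: "s > 0"
    and H: "\<And>t. s < t \<Longrightarrow> t powr (- (\<alpha> * real (k+1))) + integral {s..t} (\<lambda>u. \<alpha> * real (k+1)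
        * u powr (- (\<alpha> * real (k+1)) - 1) * ((R u - R s) / (R t - R s)) ^ k)
        = 1 / ((t powr \<alpha>) ^ k * s powr \<alpha>)"
  shows "\<exists>C>0. \<forall>t>s. R t - R s = C * (t powr \<alpha> - s powr \<alpha>)"
proof -
  define K where "K = real (k+1)"
  define p where "p = s powr \<alpha>"
  have p: "p > 0" using s by (simp add: p_def)
  have Xp: "t powr \<alpha> > p" if "t > s" for t using that s a by (simp add: p_def powr_less_mono2)
  define \<psi> where "\<psi> u = \<alpha> * K * u powr (- (\<alpha> * K) - 1)" for u
  have pw: "t powr (- (\<alpha> * K)) = 1 / (t powr \<alpha>)^(k+1)" if "t > 0" for t
    using pw2[OF that, of \<alpha> "k+1"] by (simp add: K_def)
  have pw': "\<psi> t = \<alpha> * K * (1 / (t powr \<alpha> * (t powr \<alpha>)^k * t))" if "t > 0" for t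
    using pw3[OF that, of \<alpha> "k+1"] by (simp add: K_def \<psi>_def)
  have Hs: "\<And>t. s < t \<Longrightarrow> 1 / (t powr \<alpha>)^(k+1) + integral {s..t} (\<lambda>u. \<psi> u * ((R u - R s) / (R t - R s)) ^ k)
        = 1 / ((t powr \<alpha>) ^ k * p)"
    using H s pw by (simp add: \<psi>_def K_def p_def)
  have Rpos: "R t > R s" if t: "t > s" for t
  proof (rule ccontr)
    assume "\<not> R t > R s"
    then have e: "R t - R s = 0" using Rm[of s t] t by simp
    have "integral {s..t} (\<lambda>u. \<psi> u * ((R u - R s) / (R t - R s)) ^ k) = 0"
      unfolding e using k by (simp add: zero_power)
    then have "1 / (t powr \<alpha>)^(k+1) = 1 / ((t powr \<alpha>) ^ k * p)"
      using Hs[OF t] by simp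
    then have "t powr \<alpha> = p" using p Xp[OF t] by (simp add: field_simps)
    then show False using Xp[OF t] by simp
  qed
  define h where "h t = integral {s..t} (\<lambda>u. \<psi> u * (R u - R s) ^ k)" for t
  have cont: "continuous_on {s..b} (\<lambda>u. \<psi> u * (R u - R s) ^ k)" for b
    unfolding \<psi>_def using s
    by (intro continuous_intros continuous_on_subset[OF Rc]) auto
  have hval: "h t = (R t - R s)^k * (1 / ((t powr \<alpha>) ^ k * p) - 1 / (t powr \<alpha> * (t powr \<alpha>)^k))"
    if t: "t > s" for t
  proof -
    have "integral {s..t} (\<lambda>u. \<psi> u * ((R u - R s) / (R t - R s)) ^ k)
        = integral {s..t} (\<lambda>u. \<psi> u * (R u - R s) ^ k / (R t - R s) ^ k)"
      by (rule integral_cong) (simp add: power_divide)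
    also have "\<dots> = h t / (R t - R s) ^ k" by (simp add: h_def)
    finally have "h t / (R t - R s) ^ k = 1 / ((t powr \<alpha>) ^ k * p) - 1 / (t powr \<alpha>)^(k+1)"
      using Hs[OF t] by simp
    then show ?thesis using Rpos[OF t] by (simp add: field_simps)
  qed
  have hder: "(h has_real_derivative \<psi> t * (R t - R s) ^ k) (at t)" if t: "t > s" for t
  proof -
    have "(h has_real_derivative \<psi> t * (R t - R s) ^ k) (at t within {s..t+1})"
      unfolding h_def[abs_def] by (rule integral_has_real_derivative[OF cont]) (use t in auto)
    then have "(h has_real_derivative \<psi> t * (R t - R s) ^ k) (at t within {s<..<t+1})"
      by (rule has_field_derivative_subset) auto
    then show ?thesis using at_within_open[of t "{s<..<t+1}"] t by simp
  qed
  define r where "r t = 1 - p / t powr \<alpha>" for t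
  define Q where "Q t = h t / r t ^ (k+1)" for t
  have rpos: "r t > 0" if "t > s" for t using Xp[OF that] p by (simp add: r_def divide_less_eq)
  have Qder: "(Q has_real_derivative 0) (at t)" if t: "t > s" for t
  proof -
    define X where "X = t powr \<alpha>"
    have tp: "t > 0" using t s by simp
    have X: "X > 0" using tp by (simp add: X_def)
    have dX: "((\<lambda>u. u powr \<alpha>) has_real_derivative \<alpha> * (X / t)) (at t)"
      using has_real_derivative_powr[OF tp, of \<alpha>] tp by (simp add: pw4 X_def)
    have d1: "(r has_real_derivative p * (\<alpha> * (X / t)) / (X * X)) (at t)"
      unfolding r_def[abs_def] using DERIV_diff[OF DERIV_const DERIV_divide[OF DERIV_const dX]] X
      by (simp add: X_def)
    have d2: "((\<lambda>t. r t ^ (k+1)) has_real_derivative of_nat (k+1) * (p * (\<alpha> * (X / t)) / (X * X) * r t ^ (k + 1 - Suc 0))) (at t)"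
      by (rule DERIV_power[OF d1])
    have d3: "(Q has_real_derivative
       ((\<psi> t * (R t - R s) ^ k) * r t ^ (k+1) - h t * (of_nat (k+1) * (p * (\<alpha> * (X / t)) / (X * X) * r t ^ (k + 1 - Suc 0))))
         / (r t ^ (k+1) * r t ^ (k+1))) (at t)"
      unfolding Q_def[abs_def] by (rule DERIV_divide[OF hder[OF t] d2]) (use rpos[OF t] in simp)
    have nz: "(\<psi> t * (R t - R s) ^ k) * r t ^ (k+1) - h t * (of_nat (k+1) * (p * (\<alpha> * (X / t)) / (X * X) * r t ^ (k + 1 - Suc 0))) = 0"
    proof -
      have e1: "r t ^ (k+1) = (1 - p / X) * r t ^ k" "k + 1 - Suc 0 = k" by (simp_all add: r_def X_def)
      show ?thesis unfolding e1 hval[OF t] pw'[OF tp] X_def[symmetric] K_def[symmetric]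
        using alg2[OF X _ p tp, of "X^k" \<alpha> K "(R t - R s)^k" "r t ^ k"] X
        by (simp add: K_def)
    qed
    show ?thesis using d3 unfolding nz by simp
  qed
  have Qval: "Q t = ((R t - R s) / (t powr \<alpha> - p)) ^ k / p" if t: "t > s" for t
  proof -
    define X where "X = t powr \<alpha>"
    have X: "X > 0" using t s by (simp add: X_def)
    have XP: "X > p" using Xp[OF t] by (simp add: X_def)
    have "r t = (X - p) / X" using X by (simp add: r_def X_def[symmetric] field_simps)
    then have rk: "r t ^ (k+1) = (X - p) * (X - p)^k / (X * X^k)"
      by (simp add: power_divide)
    have hk: "h t = (R t - R s)^k * (1 / (X ^ k * p) - 1 / (X * X^k))"
      using hval[OF t] by (simp add: X_def)
    have "Q t = (R t - R s)^k * (1 / (X ^ k * p) - 1 / (X * X^k)) / ((X - p) * (X - p)^k / (X * X^k))"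
      unfolding Q_def hk rk ..
    also have "\<dots> = (R t - R s)^k / (p * (X - p)^k)"
      by (rule alg3) (use X XP p in auto)
    finally show ?thesis by (simp add: X_def power_divide)
  qed
  have Qconst: "Q t = Q (s+1)" if t: "t > s" for t
  proof -
    have *: "Q y = Q x" if "s < x" "x < y" for x y
    proof (rule DERIV_isconst2[of x y Q y])
      show "continuous_on {x..y} Q"
        using that by (intro continuous_at_imp_continuous_on ballI DERIV_isCont[OF Qder]) auto
    qed (use that Qder in auto)
    show ?thesis
    proof (cases "t < s+1")
      case True
      then have "Q (s+1) = Q t" by (intro *) (use t in auto)
      then show ?thesis by (rule sym)
    next
      case False
      show ?thesis
      proof (cases "t = s+1")
        case False
        then show ?thesis using \<open>\<not> t < s+1\<close> by (intro *) auto
      qed simp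
    qed
  qed
  define C where "C = (R (s+1) - R s) / ((s+1) powr \<alpha> - p)"
  have Cpos: "C > 0" unfolding C_def using Rpos[of "s+1"] Xp[of "s+1"] by simp
  show ?thesis
  proof (intro exI conjI allI impI)
    show "C > 0" by fact
    fix t assume t: "s < t"
    have "((R t - R s) / (t powr \<alpha> - p)) ^ k = C ^ k"
      using Qconst[OF t] Qval[OF t] Qval[of "s+1"] p by (simp add: C_def)
    then have "(R t - R s) / (t powr \<alpha> - p) = C"
      by (rule power_eq_imp_eq_base) (use Rpos[OF t] Xp[OF t] Cpos k in auto)
    then show "R t - R s = C * (t powr \<alpha> - s powr \<alpha>)"
      using Xp[OF t] by (simp add: p_def field_simps)
  qed
qed

theorem mainTheorem14:
  fixes G :: "real \<Rightarrow> real" and n k :: nat and \<alpha> :: real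
  assumes "n \<ge> 2" and "1 \<le> k" and "k \<le> n - 1" and "\<alpha> > 0"
    and "is_dist_fun G" and "continuous_on UNIV G"
    and "lG G = 0" and "rG G = \<infinity>"
  shows "(\<exists>c>0. \<forall>y>0. G y = 1 - exp (- c * y powr \<alpha>)) \<longleftrightarrow>
         (\<forall>s t. 0 < s \<and> s < t \<longrightarrow>
            rec_cond_exp G n k (\<lambda>x. x powr (- \<alpha> * real (k + 1))) s t
              = t powr (- \<alpha> * real k) * s powr (- \<alpha>))"
proof -
  note cex = cexp[OF assms(5) assms(6) assms(8) _ _ assms(2) assms(4), of _ _ n]
  have rhs: "t powr (- \<alpha> * real k) * s powr (- \<alpha>) = 1 / ((t powr \<alpha>)^k * s powr \<alpha>)"
    if "0 < s" "s < t" for s t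
  proof -
    have "t powr (- (\<alpha> * real k)) = 1 / (t powr \<alpha>)^k" using that by (intro pw2) auto
    then show ?thesis by (simp add: powr_minus_divide)
  qed
  have pwb: "t powr (- (\<alpha> * real (k+1))) = 1 / (t powr \<alpha>)^(k+1)" if "t > 0" for t
    using pw2[OF that, of \<alpha> "k+1"] .
  show ?thesis
  proof
    assume "\<exists>c>0. \<forall>y>0. G y = 1 - exp (- c * y powr \<alpha>)"
    then obtain c where c: "c > 0" "\<And>y. y > 0 \<Longrightarrow> G y = 1 - exp (- c * y powr \<alpha>)" by blast
    have Rv: "RG G y = c * y powr \<alpha>" if "y > 0" for y using c(2)[OF that] by (simp add: RG_def)
    show "\<forall>s t. 0 < s \<and> s < t \<longrightarrow>
            rec_cond_exp G n k (\<lambda>x. x powr (- \<alpha> * real (k + 1))) s t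
              = t powr (- \<alpha> * real k) * s powr (- \<alpha>)"
    proof (intro allI impI)
      fix s t :: real assume st: "0 < s \<and> s < t"
      have "integral {s..t} (\<lambda>u. \<alpha> * real (k+1) * u powr (- (\<alpha> * real (k+1)) - 1)
          * ((RG G u - RG G s) / (RG G t - RG G s)) ^ k)
        = integral {s..t} (\<lambda>u. \<alpha> * real (k+1) * u powr (- (\<alpha> * real (k+1)) - 1)
          * ((u powr \<alpha> - s powr \<alpha>) / (t powr \<alpha> - s powr \<alpha>)) ^ k)"
      proof (rule integral_cong)
        fix u assume "u \<in> {s..t}"
        then have "u > 0" using st by auto
        have "(RG G u - RG G s) / (RG G t - RG G s) = (c * (u powr \<alpha> - s powr \<alpha>)) / (c * (t powr \<alpha> - s powr \<alpha>))"
          using Rv[OF \<open>u > 0\<close>] Rv[of s] Rv[of t] st by (simp add: right_diff_distrib)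
        also have "\<dots> = (u powr \<alpha> - s powr \<alpha>) / (t powr \<alpha> - s powr \<alpha>)"
          using c(1) by simp
        finally show "\<alpha> * real (k+1) * u powr (- (\<alpha> * real (k+1)) - 1)
          * ((RG G u - RG G s) / (RG G t - RG G s)) ^ k = \<alpha> * real (k+1) * u powr (- (\<alpha> * real (k+1)) - 1)
          * ((u powr \<alpha> - s powr \<alpha>) / (t powr \<alpha> - s powr \<alpha>)) ^ k" by simp
      qed
      then show "rec_cond_exp G n k (\<lambda>x. x powr (- \<alpha> * real (k + 1))) s t
              = t powr (- \<alpha> * real k) * s powr (- \<alpha>)"
        unfolding cex[OF conjunct1[OF st] conjunct2[OF st]] rhs[OF conjunct1[OF st] conjunct2[OF st]]
          FI[OF assms(4) conjunct1[OF st] conjunct2[OF st]]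
        using st pwb[of t] by simp
    qed
  next
    assume H: "\<forall>s t. 0 < s \<and> s < t \<longrightarrow>
            rec_cond_exp G n k (\<lambda>x. x powr (- \<alpha> * real (k + 1))) s t
              = t powr (- \<alpha> * real k) * s powr (- \<alpha>)"
    define R where "R = RG G"
    have Rm: "\<And>x y. x \<le> y \<Longrightarrow> R x \<le> R y" unfolding R_def by (rule R_mono[OF assms(5,8)])
    have Rc: "continuous_on UNIV R" unfolding R_def by (rule R_cont[OF assms(5,8,6)])
    have R0: "R 0 = 0" unfolding R_def RG_def using G_zero[OF assms(5,6,7)] by simp
    have core: "\<exists>C>0. \<forall>t>s. R t - R s = C * (t powr \<alpha> - s powr \<alpha>)" if s: "s > 0" for s
    proof (rule conv_core[OF Rm Rc assms(4) assms(2) s])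
      fix t assume t: "s < t"
      show "t powr (- (\<alpha> * real (k+1))) + integral {s..t} (\<lambda>u. \<alpha> * real (k+1)
        * u powr (- (\<alpha> * real (k+1)) - 1) * ((R u - R s) / (R t - R s)) ^ k)
        = 1 / ((t powr \<alpha>) ^ k * s powr \<alpha>)"
        using H[rule_format, of s t] cex[OF s t] rhs[OF s t] s t by (simp add: R_def)
    qed
    then obtain Cf where Cf: "\<And>s. s > 0 \<Longrightarrow> Cf s > 0 \<and> (\<forall>t>s. R t - R s = Cf s * (t powr \<alpha> - s powr \<alpha>))"
      by metis
    have Ceq: "Cf s1 = Cf s2" if "0 < s1" "s1 < s2" for s1 s2
    proof -
      define t where "t = s2 + 1"
      have "R t - R s1 = Cf s1 * (t powr \<alpha> - s1 powr \<alpha>)" using Cf[of s1] that by (auto simp: t_def)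
      moreover have "R s2 - R s1 = Cf s1 * (s2 powr \<alpha> - s1 powr \<alpha>)" using Cf[of s1] that by auto
      moreover have "R t - R s2 = Cf s2 * (t powr \<alpha> - s2 powr \<alpha>)" using Cf[of s2] that by (auto simp: t_def)
      ultimately have "Cf s1 * (t powr \<alpha> - s2 powr \<alpha>) = Cf s2 * (t powr \<alpha> - s2 powr \<alpha>)"
        by (simp add: algebra_simps)
      moreover have "t powr \<alpha> - s2 powr \<alpha> \<noteq> 0"
        using that assms(4) powr_less_mono2[of \<alpha> s2 t] by (simp add: t_def)
      ultimately show ?thesis by simp
    qed
    define c where "c = Cf 1"
    have Cc: "Cf s = c" if "s > 0" for s
    proof (cases "s < 1")
      case True then show ?thesis using Ceq[of s 1] that by (simp add: c_def)
    next
      case False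
      show ?thesis
      proof (cases "s = 1")
        case False then show ?thesis using Ceq[of 1 s] \<open>\<not> s < 1\<close> by (simp add: c_def)
      qed (simp add: c_def)
    qed
    have cpos: "c > 0" using Cf[of 1] by (simp add: c_def)
    define L where "L = R 1 - c"
    have RL: "R y = c * y powr \<alpha> + L" if "y > 0" for y
    proof (cases "y < 1")
      case True
      then have "R 1 - R y = c * (1 - y powr \<alpha>)" using Cf[of y] Cc[of y] that by auto
      then show ?thesis by (simp add: L_def algebra_simps)
    next
      case False
      show ?thesis
      proof (cases "y = 1")
        case True then show ?thesis by (simp add: L_def)
      next
        case False
        then have "R y - R 1 = c * (y powr \<alpha> - 1)" using Cf[of 1] Cc[of 1] \<open>\<not> y < 1\<close> by auto
        then show ?thesis by (simp add: L_def algebra_simps)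
      qed
    qed
    have L0: "L = 0"
    proof -
      have "(R \<longlongrightarrow> R 0) (at_right 0)"
        using Rc by (metis continuous_on_def UNIV_I tendsto_within_subset subset_UNIV)
      then have l1: "(R \<longlongrightarrow> 0) (at_right 0)" using R0 by simp
      have ev: "eventually (\<lambda>y. 0 \<le> y) (at_right (0::real))"
        using eventually_at_right_less[of "0::real"] by eventually_elim simp
      have "((\<lambda>y::real. y powr \<alpha>) \<longlongrightarrow> 0) (at_right 0)"
        by (rule tendsto_zero_powrI[OF tendsto_ident_at tendsto_const ev assms(4)])
      then have "((\<lambda>y. c * y powr \<alpha> + L) \<longlongrightarrow> c * 0 + L) (at_right (0::real))"
        by (intro tendsto_add tendsto_mult tendsto_const)
      moreover have "eventually (\<lambda>y. c * y powr \<alpha> + L = R y) (at_right (0::real))"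
        using eventually_at_right_less[of "0::real"] by eventually_elim (simp add: RL)
      ultimately have "(R \<longlongrightarrow> L) (at_right 0)" using Lim_transform_eventually by fastforce
      then show ?thesis using l1 tendsto_unique[OF trivial_limit_at_right_real] by blast
    qed
    show "\<exists>c>0. \<forall>y>0. G y = 1 - exp (- c * y powr \<alpha>)"
    proof (intro exI conjI allI impI)
      show "c > 0" by fact
      fix y :: real assume y: "y > 0"
      have "- ln (1 - G y) = c * y powr \<alpha>" using RL[OF y] L0 by (simp add: R_def RG_def)
      then have "exp (ln (1 - G y)) = exp (- c * y powr \<alpha>)" by simp
      then show "G y = 1 - exp (- c * y powr \<alpha>)" using G_lt1[OF assms(5,8), of y] by simp
    qed
  qed
qed

end
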